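(* Suppose the true density is $g=f_\theta$ for some $\theta\in\Theta$. Then the influence function of the minimum $S^*$-divergence functional $T^*_{(\alpha,\lambda)}$ at $G=F_\theta$ is $$IF(y;F_\theta,T^*_{(\alpha,\lambda)})=[J^*(\theta)]^{-1}\left\{u^{\alpha*}_\theta(y)-E_\theta[u^{\alpha*}_\theta(X)]\right\},$$ where $J^*(\theta)=E_\theta[u^{2\alpha*}_\theta(X)]$. In particular it does not depend on $\lambda$.
   Context: Let $\{F_\theta:\theta\in\Theta\subseteq\mathbb{R}^p\}$ be a parametric family of distributions on $\mathbb{R}$ with Lebesgue densities $f_\theta$. Fix $\alpha\ge 0$, $\lambda\in\mathbb{R}$ and put $A=1+\lambda(1-\alpha)$, $B=\alpha-\lambda(1-\alpha)$. For densities $g,f$ the $S$-divergence is $S_{(\alpha,\lambda)}(g,f)=\frac1A\int f^{1+\alpha}-\frac{1+\alpha}{AB}\int f^Bg^A+\frac1B\int g^{1+\alpha}$ (defined by continuous limits when $A=0$ or $B=0$). Let $W(x,y,h)\ge0$ be a kernel with fixed bandwidth $h>0$ which, for each $y$, is a probability density in $x$. Define $f^*_\theta(x)=\int W(x,y,h)f_\theta(y)\,dy$, $g^*(x)=\int W(x,y,h)\,dG(y)$, $\tilde u_\theta=\nabla_\theta\log f^*_\theta$, and $u^{\alpha*}_\theta(y)=\int\tilde u_\theta(x)\{f^*_\theta(x)\}^\alpha W(x,y,h)\,dx$, $u^{2\alpha*}_\theta(y)=\int\tilde u_\theta(x)\tilde u_\theta(x)^T\{f^*_\theta(x)\}^\alpha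 W(x,y,h)\,dx$. $E_\theta$ denotes expectation with $X\sim f_\theta$. The minimum $S^*$-divergence functional $T^*_{(\alpha,\lambda)}(G)$ is defined by $S_{(\alpha,\lambda)}(g^*,f^*_{T^*_{(\alpha,\lambda)}(G)})=\min_{\theta\in\Theta}S_{(\alpha,\lambda)}(g^*,f^*_\theta)$, and satisfies $\int K(g^*/f^*_\theta-1)(f^*_\theta)^{1+\alpha}\tilde u_\theta=0$ with $K(\delta)=((\delta+1)^A-1)/A$ ($\log(1+\delta)$ if $A=0$). The influence function is $IF(y;G,T)=\frac{\partial}{\partial\epsilon}T((1-\epsilon)G+\epsilon\wedge_y)\big|_{\epsilon=0}$, with $\wedge_y$ the point mass at $y$. *)

theory Defs
  imports "HOL-Analysis.Analysis"
begin

text \<open>Model density family: f t is the Lebesgue density f_t of F_t; kernel W x y (bandwidth h fixed, suppressed).\<close>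

definition Fdist :: "('p \<Rightarrow> real \<Rightarrow> real) \<Rightarrow> 'p \<Rightarrow> real measure" where
  "Fdist f t = density lborel (\<lambda>x. ennreal (f t x))"

definition fstar :: "('p \<Rightarrow> real \<Rightarrow> real) \<Rightarrow> (real \<Rightarrow> real \<Rightarrow> real) \<Rightarrow> 'p \<Rightarrow> real \<Rightarrow> real" where
  "fstar f W t x = (\<integral>z. W x z * f t z \<partial>lborel)"

definition gstar :: "(real \<Rightarrow> real \<Rightarrow> real) \<Rightarrow> real measure \<Rightarrow> real \<Rightarrow> real" where
  "gstar W G x = (\<integral>z. W x z \<partial>G)"

definition contam :: "real measure \<Rightarrow> real \<Rightarrow> real \<Rightarrow> real measure" where
  "contam G y e = measure_of (space G) (sets G)
     (\<lambda>A. ennreal (1 - e) * emeasure G A + ennreal e * indicator A y)"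

definition Acoef :: "real \<Rightarrow> real \<Rightarrow> real" where
  "Acoef \<alpha> lam = 1 + lam * (1 - \<alpha>)"

definition Bcoef :: "real \<Rightarrow> real \<Rightarrow> real" where
  "Bcoef \<alpha> lam = \<alpha> - lam * (1 - \<alpha>)"

text \<open>S-divergence S_(alpha,lambda)(g,f), with the continuous limits for A = 0 or B = 0.\<close>
definition Sdiv :: "real \<Rightarrow> real \<Rightarrow> (real \<Rightarrow> real) \<Rightarrow> (real \<Rightarrow> real) \<Rightarrow> real" where
  "Sdiv \<alpha> lam g f =
    (let A = Acoef \<alpha> lam; B = Bcoef \<alpha> lam in
     if A = 0 then
       (\<integral>x. f x powr (1 + \<alpha>) * ln (f x / g x) \<partial>lborel)
       - (1 / (1 + \<alpha>)) * (\<integral>x. f x powr (1 + \<alpha>) - g x powr (1 + \<alpha>) \<partial>lborel)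
     else if B = 0 then
       (\<integral>x. g x powr (1 + \<alpha>) * ln (g x / f x) \<partial>lborel)
       - (1 / (1 + \<alpha>)) * (\<integral>x. g x powr (1 + \<alpha>) - f x powr (1 + \<alpha>) \<partial>lborel)
     else
       (1 / A) * (\<integral>x. f x powr (1 + \<alpha>) \<partial>lborel)
       - ((1 + \<alpha>) / (A * B)) * (\<integral>x. f x powr B * g x powr A \<partial>lborel)
       + (1 / B) * (\<integral>x. g x powr (1 + \<alpha>) \<partial>lborel))"

definition Kfun :: "real \<Rightarrow> real \<Rightarrow> real" where
  "Kfun A \<delta> = (if A = 0 then ln (1 + \<delta>) else ((\<delta> + 1) powr A - 1) / A)"

definition est_integrand ::
  "real \<Rightarrow> real \<Rightarrow> ('p \<Rightarrow> real \<Rightarrow> real) \<Rightarrow> (real \<Rightarrow> real \<Rightarrow> real)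
    \<Rightarrow> ('p \<Rightarrow> real \<Rightarrow> 'p::real_vector) \<Rightarrow> real measure \<Rightarrow> 'p \<Rightarrow> real \<Rightarrow> 'p" where
  "est_integrand \<alpha> lam f W u G t x =
     (Kfun (Acoef \<alpha> lam) (gstar W G x / fstar f W t x - 1) * fstar f W t x powr (1 + \<alpha>)) *\<^sub>R u t x"

definition est_fun ::
  "real \<Rightarrow> real \<Rightarrow> ('p \<Rightarrow> real \<Rightarrow> real) \<Rightarrow> (real \<Rightarrow> real \<Rightarrow> real)
    \<Rightarrow> ('p \<Rightarrow> real \<Rightarrow> 'p::{banach,second_countable_topology}) \<Rightarrow> real measure \<Rightarrow> 'p \<Rightarrow> 'p" where
  "est_fun \<alpha> lam f W u G t = (\<integral>x. est_integrand \<alpha> lam f W u G t x \<partial>lborel)"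

definition outer :: "real^'n \<Rightarrow> real^'n^'n" where
  "outer v = (\<chi> i j. v $ i * v $ j)"

definition ualpha ::
  "real \<Rightarrow> ('p \<Rightarrow> real \<Rightarrow> real) \<Rightarrow> (real \<Rightarrow> real \<Rightarrow> real) \<Rightarrow> ('p \<Rightarrow> real \<Rightarrow> real^'n)
    \<Rightarrow> 'p \<Rightarrow> real \<Rightarrow> real^'n" where
  "ualpha \<alpha> f W u t y = (\<integral>x. (fstar f W t x powr \<alpha> * W x y) *\<^sub>R u t x \<partial>lborel)"

definition u2alpha ::
  "real \<Rightarrow> ('p \<Rightarrow> real \<Rightarrow> real) \<Rightarrow> (real \<Rightarrow> real \<Rightarrow> real) \<Rightarrow> ('p \<Rightarrow> real \<Rightarrow> real^'n)
    \<Rightarrow> 'p \<Rightarrow> real \<Rightarrow> real^'n^'n" where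
  "u2alpha \<alpha> f W u t y = (\<integral>x. (fstar f W t x powr \<alpha> * W x y) *\<^sub>R outer (u t x) \<partial>lborel)"

definition IF :: "(real measure \<Rightarrow> 'a::real_normed_vector) \<Rightarrow> real measure \<Rightarrow> real \<Rightarrow> 'a" where
  "IF T G y = vector_derivative (\<lambda>e. T (contam G y e)) (at 0 within {0..1})"

end

theory Submission
  imports Defs
begin


lemma contam_basic:
  fixes M :: "real measure"
  assumes e: "0 \<le> e" "e \<le> 1"
  shows "sets (contam M y e) = sets M" "space (contam M y e) = space M"
    and "\<And>A. A \<in> sets M \<Longrightarrow> emeasure (contam M y e) A = ennreal (1 - e) * emeasure M A + ennreal e * indicator A y"
proof -
  let ?mu = "\<lambda>A. ennreal (1 - e) * emeasure M A + ennreal e * indicator A y"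
  have ca: "countably_additive (sets M) ?mu"
    unfolding countably_additive_def
  proof (intro allI impI)
    fix A :: "nat \<Rightarrow> real set" assume A: "range A \<subseteq> sets M" "disjoint_family A" "\<Union> (range A) \<in> sets M"
    have "(\<Sum>i. ?mu (A i)) = (\<Sum>i. ennreal (1 - e) * emeasure M (A i)) + (\<Sum>i. ennreal e * indicator (A i) y)"
      by (rule suminf_add[symmetric]) auto
    also have "\<dots> = ennreal (1 - e) * (\<Sum>i. emeasure M (A i)) + ennreal e * (\<Sum>i. indicator (A i) y)"
      by (simp add: ennreal_suminf_cmult)
    also have "\<dots> = ?mu (\<Union> (range A))"
      using A by (simp add: suminf_emeasure suminf_indicator)
    finally show "(\<Sum>i. ?mu (A i)) = ?mu (\<Union> (range A))" .
  qed
  have pos: "positive (sets M) ?mu" by (simp add: positive_def)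
  have sa: "sigma_algebra (space M) (sets M)" by (rule sets.sigma_algebra_axioms)
  show "sets (contam M y e) = sets M" "space (contam M y e) = space M"
    unfolding contam_def using sets.sets_into_space by (auto simp add: sets_measure_of_conv space_measure_of_conv sets.sigma_sets_eq)
  show "\<And>A. A \<in> sets M \<Longrightarrow> emeasure (contam M y e) A = ?mu A"
    unfolding contam_def by (rule emeasure_measure_of_sigma[OF sa pos ca])
qed

lemma contam_nn_integral:
  fixes M :: "real measure" and h :: "real \<Rightarrow> ennreal"
  assumes e: "0 \<le> e" "e \<le> 1" and y: "y \<in> space M" and h: "h \<in> borel_measurable M"
  shows "(\<integral>\<^sup>+x. h x \<partial>contam M y e) = ennreal (1 - e) * (\<integral>\<^sup>+x. h x \<partial>M) + ennreal e * h y"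
  using h
proof (induct rule: borel_measurable_induct)
  case (cong f g)
  have "(\<integral>\<^sup>+x. f x \<partial>contam M y e) = (\<integral>\<^sup>+x. g x \<partial>contam M y e)"
    by (rule nn_integral_cong) (use cong contam_basic[OF e] in auto)
  moreover have "(\<integral>\<^sup>+x. f x \<partial>M) = (\<integral>\<^sup>+x. g x \<partial>M)"
    by (rule nn_integral_cong) (use cong in auto)
  ultimately show ?case using cong y by simp
next
  case (set A)
  have A': "A \<in> sets (contam M y e)" using set contam_basic[OF e] by simp
  show ?case using set contam_basic(3)[OF e set] A' by simp
next
  case (mult u c)
  have m: "u \<in> borel_measurable (contam M y e)"
    using mult(2) measurable_cong_sets[OF contam_basic(1)[OF e] refl] by blast
  show ?case using mult
    by (simp add: nn_integral_cmult m algebra_simps)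
next
  case (add u v)
  have m: "u \<in> borel_measurable (contam M y e)" "v \<in> borel_measurable (contam M y e)"
    using add measurable_cong_sets[OF contam_basic(1)[OF e] refl] by blast+
  show ?case using add m
    by (simp add: nn_integral_add algebra_simps distrib_left)
next
  case (seq U)
  have m: "\<And>i. U i \<in> borel_measurable (contam M y e)"
    using seq measurable_cong_sets[OF contam_basic(1)[OF e] refl] by blast
  have "(\<integral>\<^sup>+x. (SUP i. U i) x \<partial>contam M y e) = (SUP i. \<integral>\<^sup>+x. U i x \<partial>contam M y e)"
    unfolding SUP_apply by (rule nn_integral_monotone_convergence_SUP[OF seq(4) m])
  also have "\<dots> = (SUP i. ennreal (1 - e) * (\<integral>\<^sup>+x. U i x \<partial>M) + ennreal e * U i y)"
    using seq(3) by simp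
  also have "\<dots> = (SUP i. ennreal (1 - e) * (\<integral>\<^sup>+x. U i x \<partial>M)) + (SUP i. ennreal e * U i y)"
    by (rule ennreal_SUP_add)
       (auto intro!: mult_left_mono nn_integral_mono incseq_SucI le_funD[OF incseqD[OF seq(4)]] simp: incseq_def)
  also have "\<dots> = ennreal (1 - e) * (SUP i. \<integral>\<^sup>+x. U i x \<partial>M) + ennreal e * (SUP i. U i y)"
    by (simp add: SUP_mult_left_ennreal)
  also have "(SUP i. \<integral>\<^sup>+x. U i x \<partial>M) = (\<integral>\<^sup>+x. (SUP i. U i) x \<partial>M)"
    unfolding SUP_apply by (rule nn_integral_monotone_convergence_SUP[OF seq(4) seq(1), symmetric])
  finally show ?case unfolding SUP_apply .
qed

lemma gstar_contam:
  fixes f :: "'q \<Rightarrow> real \<Rightarrow> real"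
  assumes e: "0 \<le> e" "e \<le> 1"
    and W_meas: "case_prod W \<in> borel_measurable (lborel \<Otimes>\<^sub>M lborel)"
    and W_nonneg: "\<And>x z. W x z \<ge> 0"
    and fm: "f th \<in> borel_measurable borel" and fnn: "\<And>x. f th x \<ge> 0"
    and pos: "fstar f W th x > 0"
  shows "gstar W (contam (Fdist f th) y e) x = (1 - e) * fstar f W th x + e * W x y"
proof -
  let ?F = "Fdist f th"
  have sF: "sets ?F = sets borel" "space ?F = UNIV" by (simp_all add: Fdist_def)
  have Wx: "W x \<in> borel_measurable lborel"
    using measurable_Pair2[OF W_meas, of x] by simp
  have WxF: "W x \<in> borel_measurable ?F"
    using Wx by (simp add: measurable_cong_sets[OF sF(1) refl])
  have WxC: "W x \<in> borel_measurable (contam ?F y e)"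
    using WxF measurable_cong_sets[OF contam_basic(1)[OF e] refl] by blast
  have fm': "f th \<in> borel_measurable lborel" using fm by simp
  have intF: "(\<integral>z. W x z \<partial>?F) = fstar f W th x"
    unfolding Fdist_def fstar_def
    by (subst integral_density) (use Wx fm' fnn in \<open>auto simp: mult.commute\<close>)
  define N where "N = (\<integral>\<^sup>+z. ennreal (W x z) \<partial>?F)"
  have "(\<integral>z. W x z \<partial>?F) = enn2real N"
    unfolding N_def by (rule integral_eq_nn_integral) (use WxF W_nonneg in auto)
  with intF pos have fin: "N \<noteq> top" and NN: "enn2real N = fstar f W th x" by auto
  have "gstar W (contam ?F y e) x = enn2real (\<integral>\<^sup>+z. ennreal (W x z) \<partial>contam ?F y e)"
    unfolding gstar_def by (rule integral_eq_nn_integral) (use WxC W_nonneg in auto)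
  also have "(\<integral>\<^sup>+z. ennreal (W x z) \<partial>contam ?F y e) = ennreal (1 - e) * N + ennreal e * ennreal (W x y)"
    unfolding N_def by (rule contam_nn_integral) (use e WxF sF in auto)
  also have "enn2real \<dots> = (1 - e) * fstar f W th x + e * W x y"
  proof -
    obtain a where a: "N = ennreal a" "a \<ge> 0" using fin by (cases N) auto
    have "ennreal (1 - e) * N + ennreal e * ennreal (W x y) = ennreal ((1 - e) * a + e * W x y)"
    proof -
      have "ennreal (1 - e) * ennreal a = ennreal ((1 - e) * a)" using a e by (simp add: ennreal_mult)
      moreover have "ennreal e * ennreal (W x y) = ennreal (e * W x y)" using e W_nonneg[of x y] by (simp add: ennreal_mult)
      moreover have "ennreal ((1 - e) * a) + ennreal (e * W x y) = ennreal ((1 - e) * a + e * W x y)"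
        using a e W_nonneg[of x y] by (intro ennreal_plus[symmetric]) auto
      ultimately show ?thesis using a(1) by simp
    qed
    moreover have "enn2real (ennreal ((1 - e) * a + e * W x y)) = (1 - e) * a + e * W x y"
      using a e W_nonneg[of x y] by (intro enn2real_ennreal) simp
    moreover have "a = fstar f W th x" using a NN by simp
    ultimately show ?thesis using a by (simp only:)
  qed
  finally show ?thesis .
qed

lemma has_derivative_zero_times_cont:
  fixes a :: "'a::real_normed_vector \<Rightarrow> real" and b :: "'a \<Rightarrow> 'b::real_normed_vector"
  assumes da: "(a has_derivative a') (at x within S)" and a0: "a x = 0"
    and cb: "continuous (at x within S) b"
  shows "((\<lambda>z. a z *\<^sub>R b z) has_derivative (\<lambda>h. a' h *\<^sub>R b x)) (at x within S)"
proof -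
  have bl: "bounded_linear a'" using da by (simp add: has_derivative_def)
  then interpret a': bounded_linear a' .
  obtain K where K: "K > 0" "\<And>h. norm (a' h) \<le> norm h * K" using a'.pos_bounded by blast
  have r: "((\<lambda>y. (1 / norm (y - x)) *\<^sub>R (a y - (a x + a' (y - x)))) \<longlongrightarrow> 0) (at x within S)"
    using da by (simp add: has_derivative_within)
  have ev: "eventually (\<lambda>y. norm ((1 / norm (y - x)) *\<^sub>R (a y - (a x + a' (y - x)))) < 1) (at x within S)"
    using r unfolding tendsto_iff by (auto simp: dist_norm)
  have B: "Bfun (\<lambda>y. (1 / norm (y - x)) * a y) (at x within S)"
  proof (rule BfunI)
    show "eventually (\<lambda>y. norm ((1 / norm (y - x)) * a y) \<le> 1 + K) (at x within S)"
      using ev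
    proof eventually_elim
      case (elim y)
      have eq: "(1 / norm (y - x)) * a y = (1 / norm (y - x)) *\<^sub>R (a y - (a x + a' (y - x))) + (1 / norm (y - x)) * a' (y - x)"
        using a0 by (simp add: algebra_simps)
      have "norm ((1 / norm (y - x)) * a' (y - x)) \<le> K"
      proof (cases "y = x")
        case True then show ?thesis using K by simp
      next
        case False
        then have "norm ((1 / norm (y - x)) * a' (y - x)) = norm (a' (y - x)) / norm (y - x)" by simp
        also have "\<dots> \<le> K" using K(2)[of "y - x"] False by (simp add: divide_le_eq mult.commute)
        finally show ?thesis .
      qed
      then show ?case using elim eq norm_triangle_ineq[of "(1 / norm (y - x)) *\<^sub>R (a y - (a x + a' (y - x)))" "(1 / norm (y - x)) * a' (y - x)"]
        by (simp only:)
    qed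
  qed
  have Z: "Zfun (\<lambda>y. b y - b x) (at x within S)"
    using cb by (simp add: continuous_within tendsto_Zfun_iff)
  have Zp: "Zfun (\<lambda>y. ((1 / norm (y - x)) * a y) *\<^sub>R (b y - b x)) (at x within S)"
    by (rule bounded_bilinear.Bfun_prod_Zfun[OF bounded_bilinear_scaleR B Z])
  have d2: "((\<lambda>z. a z *\<^sub>R (b z - b x)) has_derivative (\<lambda>h. 0)) (at x within S)"
    unfolding has_derivative_within
  proof
    show "bounded_linear (\<lambda>h. 0::'b)" by simp
    show "((\<lambda>y. (1 / norm (y - x)) *\<^sub>R (a y *\<^sub>R (b y - b x) - (a x *\<^sub>R (b x - b x) + 0))) \<longlongrightarrow> 0) (at x within S)"
      using Zp by (simp add: tendsto_Zfun_iff a0)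
  qed
  have d1: "((\<lambda>z. a z *\<^sub>R b x) has_derivative (\<lambda>h. a' h *\<^sub>R b x)) (at x within S)"
    by (rule has_derivative_scaleR_left[OF da])
  have "((\<lambda>z. a z *\<^sub>R b x + a z *\<^sub>R (b z - b x)) has_derivative (\<lambda>h. a' h *\<^sub>R b x + 0)) (at x within S)"
    by (rule has_derivative_add[OF d1 d2])
  then show ?thesis by (simp add: algebra_simps)
qed

lemma a_deriv:
  fixes \<phi> :: "'v::real_normed_vector \<Rightarrow> real"
  assumes d\<phi>: "(\<phi> has_derivative \<phi>') (at th)" and c: "\<phi> th = c" "c > 0"
  shows "((\<lambda>p. Kfun A (((1 - fst p) * c + fst p * w) / \<phi> (snd p) - 1) * \<phi> (snd p) powr (1 + \<alpha>))
     has_derivative (\<lambda>z. (fst z * (w - c) / c - \<phi>' (snd z) / c) * c powr (1 + \<alpha>))) (at (0, th))"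
proof -
  have d\<psi>: "((\<lambda>p. \<phi> (snd p)) has_derivative (\<lambda>z. \<phi>' (snd z))) (at (0::real, th))"
  proof -
    have s: "(snd has_derivative snd) (at (0::real, th))"
      using has_derivative_snd[OF has_derivative_ident, of "at (0::real, th)"] by (simp add: fun_eq_iff cond_case_prod_eta)
    show ?thesis using has_derivative_compose[OF s, of \<phi> \<phi>'] d\<phi> by simp
  qed
  have df: "(fst has_derivative fst) (at (0::real, th))"
    using has_derivative_fst[OF has_derivative_ident, of "at (0::real, th)"] by (simp add: fun_eq_iff cond_case_prod_eta)
  define q where "q p = ((1 - fst p) * c + fst p * w) / \<phi> (snd p)" for p :: "real \<times> 'v"
  define Q where "Q z = fst z * (w - c) / c - \<phi>' (snd z) / c" for z :: "real \<times> 'v"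
  have q0: "q (0, th) = 1" using c by (simp add: q_def)
  have dn: "((\<lambda>p. (1 - fst p) * c + fst p * w) has_derivative (\<lambda>z. - fst z * c + fst z * w)) (at (0::real, th))"
    by (rule has_derivative_eq_rhs, (rule derivative_intros df)+) (auto simp: fun_eq_iff)
  have dq: "(q has_derivative Q) (at (0, th))"
    unfolding q_def[abs_def]
    by (rule has_derivative_eq_rhs[OF has_derivative_divide[OF dn d\<psi>]])
       (use c in \<open>auto simp: fun_eq_iff Q_def field_simps\<close>)
  have dK: "((\<lambda>p. Kfun A (q p - 1)) has_derivative Q) (at (0, th))"
  proof (cases "A = 0")
    case True
    have eq: "(\<lambda>p. Kfun A (q p - 1)) = (\<lambda>p. ln (q p))" using True by (simp add: Kfun_def)
    show ?thesis unfolding eq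
      by (rule has_derivative_eq_rhs[OF has_derivative_ln[OF _ dq]]) (use q0 in \<open>auto simp: fun_eq_iff\<close>)
  next
    case False
    have eq: "(\<lambda>p. Kfun A (q p - 1)) = (\<lambda>p. (q p powr A - 1) / A)" using False by (simp add: Kfun_def)
    have dp: "((\<lambda>p. q p powr A) has_derivative (\<lambda>h. (q (0,th) powr A) * (0 * ln (q (0,th)) + Q h * A / q (0,th)))) (at (0, th))"
      by (rule has_derivative_powr[OF dq has_derivative_const]) (use q0 in auto)
    show ?thesis unfolding eq
      by (rule has_derivative_eq_rhs[OF has_derivative_divide'[OF has_derivative_diff[OF dp has_derivative_const] has_derivative_const]])
         (use q0 False in \<open>auto simp: fun_eq_iff\<close>)
  qed
  have dP: "((\<lambda>p. \<phi> (snd p) powr (1 + \<alpha>)) has_derivative (\<lambda>h. c powr (1 + \<alpha>) * (\<phi>' (snd h) * (1 + \<alpha>) / c))) (at (0::real, th))"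
    by (rule has_derivative_eq_rhs[OF has_derivative_powr[OF d\<psi> has_derivative_const]]) (use c in \<open>auto simp: fun_eq_iff\<close>)
  have "((\<lambda>p. Kfun A (q p - 1) * \<phi> (snd p) powr (1 + \<alpha>)) has_derivative (\<lambda>z. Q z * c powr (1 + \<alpha>))) (at (0, th))"
    by (rule has_derivative_eq_rhs[OF has_derivative_mult[OF dK dP]]) (use q0 c in \<open>auto simp: fun_eq_iff Kfun_def\<close>)
  then show ?thesis by (simp add: q_def Q_def)
qed

lemma fstar_meas:
  assumes fm: "f t \<in> borel_measurable borel"
    and W_meas: "case_prod W \<in> borel_measurable (lborel \<Otimes>\<^sub>M lborel)"
  shows "(\<lambda>x. fstar f W t x) \<in> borel_measurable lborel"
proof -
  have [measurable]: "f t \<in> borel_measurable lborel" using fm by simp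
  have [measurable]: "case_prod W \<in> borel_measurable (lborel \<Otimes>\<^sub>M lborel)" by (rule W_meas)
  have "(\<lambda>(x, z). W x z * f t z) \<in> borel_measurable (lborel \<Otimes>\<^sub>M lborel)"
    by measurable
  then show ?thesis unfolding fstar_def
    by (rule lborel.borel_measurable_lebesgue_integral[where f="\<lambda>x z. W x z * f t z"])
qed

lemma u_meas:
  fixes f :: "real^'p \<Rightarrow> real \<Rightarrow> real" and u :: "real^'p \<Rightarrow> real \<Rightarrow> real^'p"
  assumes Theta: "open \<Theta>" "th \<in> \<Theta>"
    and dens_meas: "\<And>t. t \<in> \<Theta> \<Longrightarrow> f t \<in> borel_measurable borel"
    and W_meas: "case_prod W \<in> borel_measurable (lborel \<Otimes>\<^sub>M lborel)"
    and score: "\<And>x. ((\<lambda>s. ln (fstar f W s x)) has_derivative (\<lambda>v. u th x \<bullet> v)) (at th)"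
  shows "u th \<in> borel_measurable lborel"
proof (rule borel_measurable_euclidean_space[THEN iffD2], intro ballI)
  fix b :: "real^'p" assume b: "b \<in> Basis"
  then have nb: "norm b = 1" by simp
  obtain r where r: "r > 0" "ball th r \<subseteq> \<Theta>" using open_contains_ball[THEN iffD1, OF Theta(1)] Theta(2) by blast
  define h where "h n = r / (2 * (real n + 1))" for n :: nat
  have hpos: "h n > 0" for n using r by (simp add: h_def)
  have hlt: "h n < r" for n
  proof -
    have "h n \<le> r / 2" unfolding h_def using r by (intro divide_left_mono) auto
    then show ?thesis using r by linarith
  qed
  have hin: "th + h n *\<^sub>R b \<in> \<Theta>" for n
    using r hpos[of n] hlt[of n] nb by (intro subsetD[OF r(2)]) (simp add: dist_norm)
  have h0: "filterlim h (at 0) sequentially"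
  proof (rule filterlim_atI)
    have "(\<lambda>n. r / 2 * inverse (real n + 1)) \<longlonglongrightarrow> r / 2 * 0"
      using LIMSEQ_inverse_real_of_nat by (intro tendsto_mult tendsto_const) (simp add: add.commute)
    moreover have "h = (\<lambda>n. r / 2 * inverse (real n + 1))" by (simp add: h_def fun_eq_iff field_simps)
    ultimately show "h \<longlonglongrightarrow> 0" by simp
    show "\<forall>\<^sub>F n in sequentially. h n \<noteq> 0"
    proof (rule always_eventually, intro allI)
      fix n show "h n \<noteq> 0" using hpos[of n] by simp
    qed
  qed
  define \<psi> where "\<psi> x s = ln (fstar f W s x)" for x s
  show "(\<lambda>x. u th x \<bullet> b) \<in> borel_measurable lborel"
  proof (rule borel_measurable_LIMSEQ_real[where u="\<lambda>n x. (\<psi> x (th + h n *\<^sub>R b) - \<psi> x th) / h n"])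
    fix x :: real
    have dl: "((\<lambda>t. th + t *\<^sub>R b) has_derivative (\<lambda>t. t *\<^sub>R b)) (at (0::real))"
      by (auto intro!: derivative_eq_intros)
    have "((\<lambda>t. \<psi> x (th + t *\<^sub>R b)) has_derivative (\<lambda>t. u th x \<bullet> (t *\<^sub>R b))) (at 0)"
      using has_derivative_compose[OF dl, of "\<psi> x" "\<lambda>v. u th x \<bullet> v"] score[of x]
      by (simp add: \<psi>_def[abs_def])
    then have "((\<lambda>t. \<psi> x (th + t *\<^sub>R b)) has_field_derivative (u th x \<bullet> b)) (at 0)"
      unfolding has_field_derivative_def by (simp add: mult.commute[of _ "u th x \<bullet> b"])
    from DERIV_D[OF this] have "((\<lambda>t. (\<psi> x (th + t *\<^sub>R b) - \<psi> x th) / t) \<longlongrightarrow> u th x \<bullet> b) (at 0)"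
      by simp
    from filterlim_compose[OF this h0]
    show "(\<lambda>n. (\<psi> x (th + h n *\<^sub>R b) - \<psi> x th) / h n) \<longlonglongrightarrow> u th x \<bullet> b" .
  next
    fix n
    have [measurable]: "(\<lambda>x. fstar f W (th + h n *\<^sub>R b) x) \<in> borel_measurable lborel"
      by (rule fstar_meas[of f _ W, OF dens_meas[OF hin] W_meas])
    have [measurable]: "(\<lambda>x. fstar f W th x) \<in> borel_measurable lborel"
      by (rule fstar_meas[of f _ W, OF dens_meas[OF Theta(2)] W_meas])
    show "(\<lambda>x. (\<psi> x (th + h n *\<^sub>R b) - \<psi> x th) / h n) \<in> borel_measurable lborel"
      unfolding \<psi>_def by measurable
  qed
qed

lemma Kfun_0 [simp]: "Kfun A 0 = 0"
  by (simp add: Kfun_def)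

lemma contam_0: "contam M y 0 = M"
  by (simp add: contam_def measure_of_of_measure)

lemma outer_mulv: "outer v *v w = (v \<bullet> w) *\<^sub>R v"
  by (simp add: outer_def matrix_vector_mult_def inner_vec_def vec_eq_iff sum_distrib_left mult_ac)

lemma bounded_linear_mulv: "bounded_linear (\<lambda>M::real^'n^'m. M *v w)"
proof -
  have "linear (\<lambda>M::real^'n^'m. M *v w)"
    by (intro linearI) (simp_all add: matrix_vector_mult_def vec_eq_iff sum.distrib algebra_simps sum_distrib_left)
  then show ?thesis by (simp add: linear_conv_bounded_linear)
qed

lemma approach_P:
  fixes th :: "'v::euclidean_space"
  assumes "open \<Theta>" "th \<in> \<Theta>" "i \<in> Basis" "e > 0"
  shows "\<exists>d. 0 < \<bar>d\<bar> \<and> \<bar>d\<bar> < e \<and> (0::real, th) + d *\<^sub>R i \<in> {0..1} \<times> \<Theta>"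
proof -
  obtain r where r: "r > 0" "ball th r \<subseteq> \<Theta>" using open_contains_ball[THEN iffD1, OF assms(1)] assms(2) by blast
  define d where "d = min (e / 2) (min (r / 2) 1)"
  have d: "d > 0" "d < e" "d < r" "d \<le> 1" using r assms(4) by (auto simp: d_def)
  from assms(3) consider (a) "i = (1, 0)" | (b) j where "j \<in> Basis" "i = (0, j)"
    by (auto simp: Basis_prod_def)
  then show ?thesis
  proof cases
    case a
    then show ?thesis using d assms(2) by (intro exI[of _ d]) auto
  next
    case b
    have "th + d *\<^sub>R j \<in> \<Theta>" using d b(1) by (intro subsetD[OF r(2)]) (simp add: dist_norm)
    then show ?thesis using d b by (intro exI[of _ d]) auto
  qed
qed

lemma outer_meas [measurable]: "outer \<in> borel_measurable borel"
proof (rule borel_measurable_continuous_onI)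
  show "continuous_on UNIV (outer :: real^'n \<Rightarrow> real^'n^'n)"
    unfolding outer_def[abs_def] by (intro continuous_intros)
qed

lemma matrix_inv_left':
  fixes A :: "'a::semiring_1^'n^'m"
  assumes "invertible A"
  shows "matrix_inv A ** A = mat 1"
proof -
  have "\<exists>A'::'a^'m^'n. A ** A' = mat 1 \<and> A' ** A = mat 1" using assms by (simp add: invertible_def)
  then have "A ** matrix_inv A = mat 1 \<and> matrix_inv A ** A = mat 1"
    unfolding matrix_inv_def by (rule someI_ex)
  then show ?thesis by simp
qed




theorem corollary1:
  fixes f :: "real^'p \<Rightarrow> real \<Rightarrow> real"
    and \<Theta> :: "(real^'p) set"
    and W :: "real \<Rightarrow> real \<Rightarrow> real"
    and u :: "real^'p \<Rightarrow> real \<Rightarrow> real^'p"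
    and T :: "real measure \<Rightarrow> real^'p"
    and \<alpha> lam y :: real
    and \<theta> :: "real^'p"
  defines "F \<equiv> Fdist f \<theta>"
  defines "J \<equiv> (\<integral>z. u2alpha \<alpha> f W u \<theta> z \<partial>F)"
  assumes alpha: "\<alpha> \<ge> 0"
    and Theta: "open \<Theta>" "\<theta> \<in> \<Theta>"
    \<comment> \<open>f_t are Lebesgue probability densities\<close>
    and dens_meas: "\<And>t. t \<in> \<Theta> \<Longrightarrow> f t \<in> borel_measurable borel"
    and dens_nonneg: "\<And>t x. t \<in> \<Theta> \<Longrightarrow> f t x \<ge> 0"
    and dens_int: "\<And>t. t \<in> \<Theta> \<Longrightarrow> (\<integral>x. f t x \<partial>lborel) = 1"
    \<comment> \<open>W(., z) is a probability density for every z\<close>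
    and W_meas: "case_prod W \<in> borel_measurable (lborel \<Otimes>\<^sub>M lborel)"
    and W_nonneg: "\<And>x z. W x z \<ge> 0"
    and W_dens: "\<And>z. (\<integral>x. W x z \<partial>lborel) = 1"
    and fstar_pos: "\<And>t x. t \<in> \<Theta> \<Longrightarrow> fstar f W t x > 0"
    \<comment> \<open>u t x is the score  grad_t log f*_t(x)\<close>
    and score: "\<And>t x. t \<in> \<Theta> \<Longrightarrow>
        ((\<lambda>s. ln (fstar f W s x)) has_derivative (\<lambda>v. u t x \<bullet> v)) (at t)"
    and score_cont: "\<And>x. continuous (at \<theta>) (\<lambda>t. u t x)"
    \<comment> \<open>T is the minimum S*-divergence functional (on the contaminated distributions)\<close>
    and T_min: "\<And>e. e \<in> {0..1} \<Longrightarrow> T (contam F y e) \<in> \<Theta> \<and>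
        (\<forall>t\<in>\<Theta>. Sdiv \<alpha> lam (gstar W (contam F y e)) (fstar f W (T (contam F y e)))
                 \<le> Sdiv \<alpha> lam (gstar W (contam F y e)) (fstar f W t))"
    \<comment> \<open>... and it satisfies the estimating equation\<close>
    and T_est: "\<exists>e0>0. \<forall>e\<in>{0..e0}.
        est_fun \<alpha> lam f W u (contam F y e) (T (contam F y e)) = 0"
    \<comment> \<open>Fisher consistency at the model\<close>
    and T_fisher: "T F = \<theta>"
    \<comment> \<open>regularity: differentiation under the integral sign of the estimating equation\<close>
    and interchange:
      "((\<lambda>(e, t). est_fun \<alpha> lam f W u (contam F y e) t) has_derivative
          (\<lambda>z. \<integral>x. frechet_derivative (\<lambda>(e, t). est_integrand \<alpha> lam f W u (contam F y e) t x)
                        (at (0, \<theta>) within {0..1} \<times> \<Theta>) z \<partial>lborel))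
        (at (0, \<theta>) within {0..1} \<times> \<Theta>)"
    \<comment> \<open>regularity: integrability conditions (Fubini)\<close>
    and int1: "integrable (lborel \<Otimes>\<^sub>M lborel)
        (\<lambda>(x, z). (f \<theta> z * W x z * fstar f W \<theta> x powr \<alpha>) *\<^sub>R u \<theta> x)"
    and int2: "integrable (lborel \<Otimes>\<^sub>M lborel)
        (\<lambda>(x, z). (f \<theta> z * W x z * fstar f W \<theta> x powr \<alpha>) *\<^sub>R outer (u \<theta> x))"
    and int3: "integrable lborel (\<lambda>x. (W x y * fstar f W \<theta> x powr \<alpha>) *\<^sub>R u \<theta> x)"
    and J_inv: "invertible J"
    \<comment> \<open>the influence function exists\<close>
    and T_diff: "(\<lambda>e. T (contam F y e)) differentiable (at 0 within {0..1})"
  shows "IF T F y = matrix_inv J *v (ualpha \<alpha> f W u \<theta> y - (\<integral>z. ualpha \<alpha> f W u \<theta> z \<partial>F))"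
proof -
  let ?A = "Acoef \<alpha> lam"
  define P where "P = {0..1::real} \<times> \<Theta>"
  define c where "c x = fstar f W \<theta> x" for x
  have cpos: "c x > 0" for x using fstar_pos[OF Theta(2)] by (simp add: c_def)
  have p0P: "(0, \<theta>) \<in> P" using Theta by (simp add: P_def)
  have dfs: "((\<lambda>s. fstar f W s x) has_derivative (\<lambda>v. c x * (u \<theta> x \<bullet> v))) (at \<theta>)" for x
  proof -
    have "((\<lambda>s. exp (ln (fstar f W s x))) has_derivative (\<lambda>v. exp (ln (fstar f W \<theta> x)) * (u \<theta> x \<bullet> v))) (at \<theta>)"
      by (rule has_derivative_eq_rhs[OF has_derivative_exp[OF score[OF Theta(2)]]]) (simp add: fun_eq_iff)
    then have "((\<lambda>s. exp (ln (fstar f W s x))) has_derivative (\<lambda>v. c x * (u \<theta> x \<bullet> v))) (at \<theta>)"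
      using cpos[of x] by (simp add: c_def)
    then show ?thesis
      by (rule has_derivative_transform_within_open[OF _ Theta(1) Theta(2)]) (simp add: fstar_pos)
  qed
  define a where "a x p = Kfun ?A (((1 - fst p) * c x + fst p * W x y) / fstar f W (snd p) x - 1)
      * fstar f W (snd p) x powr (1 + \<alpha>)" for x p
  define A' where "A' x z = (fst z * (W x y - c x) / c x - c x * (u \<theta> x \<bullet> snd z) / c x) * c x powr (1 + \<alpha>)" for x z
  have da: "(a x has_derivative A' x) (at (0, \<theta>) within P)" for x
  proof -
    have "((\<lambda>p. a x p) has_derivative A' x) (at (0, \<theta>))"
      unfolding a_def[abs_def] A'_def[abs_def]
      by (rule a_deriv[OF dfs]) (simp_all add: c_def cpos[unfolded c_def])
    then show ?thesis by (rule has_derivative_at_withinI)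
  qed
  have a0: "a x (0, \<theta>) = 0" for x using cpos[of x] by (simp add: a_def c_def)
  have cb: "continuous (at (0, \<theta>) within P) (\<lambda>p. u (snd p) x)" for x
  proof -
    have "isCont (\<lambda>p. u (snd p) x) (0::real, \<theta>)"
    proof -
      have s: "isCont snd (0::real, \<theta>)" by (intro continuous_intros)
      show ?thesis using isCont_o2[OF s, of "\<lambda>t. u t x"] score_cont[of x] by simp
    qed
    then show ?thesis by (rule continuous_at_imp_continuous_at_within)
  qed
  have dE: "((\<lambda>p. a x p *\<^sub>R u (snd p) x) has_derivative (\<lambda>z. A' x z *\<^sub>R u \<theta> x)) (at (0, \<theta>) within P)" for x
    using has_derivative_zero_times_cont[OF da a0 cb] by simp
  have Eeq: "(\<lambda>(e, t). est_integrand \<alpha> lam f W u (contam F y e) t x) p = a x p *\<^sub>R u (snd p) x"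
    if "p \<in> P" for x p
  proof -
    obtain e t where p: "p = (e, t)" by (cases p)
    have e: "0 \<le> e" "e \<le> 1" using that by (auto simp: P_def p)
    have "gstar W (contam F y e) x = (1 - e) * c x + e * W x y"
      unfolding F_def c_def
      by (rule gstar_contam[OF e W_meas W_nonneg dens_meas[OF Theta(2)] dens_nonneg[OF Theta(2)] fstar_pos[OF Theta(2)]])
    then show ?thesis by (simp add: p est_integrand_def a_def)
  qed
  have dE': "((\<lambda>(e, t). est_integrand \<alpha> lam f W u (contam F y e) t x) has_derivative (\<lambda>z. A' x z *\<^sub>R u \<theta> x)) (at (0, \<theta>) within P)" for x
    by (rule has_derivative_transform_within[OF dE[of x] zero_less_one p0P]) (simp add: Eeq)
  have fd: "frechet_derivative (\<lambda>(e, t). est_integrand \<alpha> lam f W u (contam F y e) t x) (at (0, \<theta>) within P)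
      = (\<lambda>z. A' x z *\<^sub>R u \<theta> x)" for x
  proof (rule frechet_derivative_unique_within)
    show "((\<lambda>(e, t). est_integrand \<alpha> lam f W u (contam F y e) t x) has_derivative
       frechet_derivative (\<lambda>(e, t). est_integrand \<alpha> lam f W u (contam F y e) t x) (at (0, \<theta>) within P)) (at (0, \<theta>) within P)"
      using dE'[of x] frechet_derivative_works differentiableI by blast
    show "((\<lambda>(e, t). est_integrand \<alpha> lam f W u (contam F y e) t x) has_derivative (\<lambda>z. A' x z *\<^sub>R u \<theta> x)) (at (0, \<theta>) within P)"
      by (rule dE')
    show "\<exists>d. 0 < \<bar>d\<bar> \<and> \<bar>d\<bar> < e \<and> (0, \<theta>) + d *\<^sub>R i \<in> P" if "i \<in> Basis" "e > 0" for i e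
      unfolding P_def by (rule approach_P[OF Theta that])
  qed
  define D where "D z = (\<integral>x. A' x z *\<^sub>R u \<theta> x \<partial>lborel)" for z
  have dH: "((\<lambda>(e, t). est_fun \<alpha> lam f W u (contam F y e) t) has_derivative D) (at (0, \<theta>) within P)"
    using interchange unfolding P_def[symmetric] fd D_def[abs_def] .
  define T' where "T' = IF T F y"
  have hT: "((\<lambda>e. T (contam F y e)) has_vector_derivative T') (at 0 within {0..1})"
    using T_diff unfolding T'_def IF_def by (simp add: vector_derivative_works)
  define g where "g e = (e, T (contam F y e))" for e
  have g0: "g 0 = (0, \<theta>)" by (simp add: g_def contam_0 T_fisher)
  have gP: "g ` {0..1} \<subseteq> P" using T_min by (auto simp: g_def P_def)
  have dg: "(g has_derivative (\<lambda>h. (h, h *\<^sub>R T'))) (at 0 within {0..1})"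
    unfolding g_def using has_derivative_Pair[OF has_derivative_ident hT[unfolded has_vector_derivative_def]] by simp
  define H where "H = (\<lambda>(e, t). est_fun \<alpha> lam f W u (contam F y e) t)"
  have dH': "(H has_derivative D) (at (g 0) within g ` {0..1})"
    unfolding g0 H_def by (rule has_derivative_subset[OF dH gP])
  have dHg: "((H \<circ> g) has_derivative (D \<circ> (\<lambda>h. (h, h *\<^sub>R T')))) (at 0 within {0..1})"
    by (rule diff_chain_within[OF dg dH'])
  obtain e0 where e0: "e0 > 0" "\<forall>e\<in>{0..e0}. est_fun \<alpha> lam f W u (contam F y e) (T (contam F y e)) = 0"
    using T_est by blast
  have d0: "((\<lambda>_. 0) has_derivative (D \<circ> (\<lambda>h. (h, h *\<^sub>R T')))) (at 0 within {0..1})"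
    by (rule has_derivative_transform_within[OF dHg e0(1)]) (use e0(2) in \<open>auto simp: H_def g_def dist_real_def\<close>)
  have "D \<circ> (\<lambda>h. (h, h *\<^sub>R T')) = (\<lambda>_. 0)"
  proof (rule frechet_derivative_unique_within[OF d0 has_derivative_const])
    show "\<exists>d. 0 < \<bar>d\<bar> \<and> \<bar>d\<bar> < e \<and> (0::real) + d *\<^sub>R i \<in> {0..1}" if "i \<in> Basis" "e > 0" for i e
      using that by (intro exI[of _ "min (e/2) 1"]) auto
  qed
  then have D0: "D (1, T') = 0" by (metis comp_apply scaleR_one)
  have um[measurable]: "u \<theta> \<in> borel_measurable lborel"
    by (rule u_meas[of \<Theta> \<theta> f W u, OF Theta dens_meas W_meas score[OF Theta(2)]])
  have cm[measurable]: "(\<lambda>x. fstar f W \<theta> x) \<in> borel_measurable lborel"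
    by (rule fstar_meas[of f _ W, OF dens_meas[OF Theta(2)] W_meas])
  have Wm[measurable]: "case_prod W \<in> borel_measurable (lborel \<Otimes>\<^sub>M lborel)" by (rule W_meas)
  have fm[measurable]: "f \<theta> \<in> borel_measurable lborel" using dens_meas[OF Theta(2)] by simp
  define v1 where "v1 x = (W x y * c x powr \<alpha>) *\<^sub>R u \<theta> x" for x
  define v2 where "v2 x = (c x * c x powr \<alpha>) *\<^sub>R u \<theta> x" for x
  define M3 where "M3 x = (c x * c x powr \<alpha>) *\<^sub>R outer (u \<theta> x)" for x
  have pw: "A' x (1, T') *\<^sub>R u \<theta> x = v1 x - v2 x - M3 x *v T'" for x
  proof -
    have e1: "c x powr (1 + \<alpha>) = c x * c x powr \<alpha>" using cpos[of x] by (simp add: powr_add)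
    have e2: "A' x (1, T') = W x y * c x powr \<alpha> - c x * c x powr \<alpha> - c x * c x powr \<alpha> * (u \<theta> x \<bullet> T')"
      using cpos[of x] unfolding A'_def e1 by (simp add: field_simps)
    have e3: "M3 x *v T' = (c x * c x powr \<alpha> * (u \<theta> x \<bullet> T')) *\<^sub>R u \<theta> x"
      unfolding M3_def scaleR_matrix_vector_assoc[symmetric] outer_mulv by simp
    show ?thesis unfolding e2 e3 v1_def v2_def by (simp add: algebra_simps)
  qed
  have intW: "integrable lborel (\<lambda>z. f \<theta> z * W x z)" for x
  proof (rule ccontr)
    assume "\<not> ?thesis"
    then have "(\<integral>z. W x z * f \<theta> z \<partial>lborel) = 0"
      by (simp add: not_integrable_integral_eq mult.commute)
    then show False using cpos[of x] by (simp add: c_def fstar_def)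
  qed
  have cint: "(\<integral>z. f \<theta> z * W x z \<partial>lborel) = c x" for x
    by (simp add: c_def fstar_def mult.commute)
  have inner1: "(\<integral>z. (f \<theta> z * W x z * fstar f W \<theta> x powr \<alpha>) *\<^sub>R u \<theta> x \<partial>lborel) = v2 x" for x
    using intW[of x] by (simp add: cint v2_def c_def)
  have inner2: "(\<integral>z. (f \<theta> z * W x z * fstar f W \<theta> x powr \<alpha>) *\<^sub>R outer (u \<theta> x) \<partial>lborel) = M3 x" for x
    using intW[of x] by (simp add: cint M3_def c_def)
  have iv1: "integrable lborel v1" using int3 unfolding v1_def[abs_def] c_def .
  have iv2: "integrable lborel v2"
    using lborel_pair.integrable_fst[OF int1] by (simp add: inner1)
  have iM3: "integrable lborel M3"
    using lborel_pair.integrable_fst[OF int2] by (simp add: inner2)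
  have iM3v: "integrable lborel (\<lambda>x. M3 x *v T')"
    by (rule integrable_bounded_linear[OF bounded_linear_mulv iM3])
  have "D (1, T') = (\<integral>x. v1 x \<partial>lborel) - (\<integral>x. v2 x \<partial>lborel) - (\<integral>x. M3 x \<partial>lborel) *v T'"
    unfolding D_def pw
    using iv1 iv2 iM3v integral_bounded_linear[OF bounded_linear_mulv iM3, of T']
    by simp
  moreover have I1: "(\<integral>x. v1 x \<partial>lborel) = ualpha \<alpha> f W u \<theta> y"
    by (simp add: v1_def ualpha_def c_def mult.commute)
  moreover have I2: "(\<integral>x. v2 x \<partial>lborel) = (\<integral>z. ualpha \<alpha> f W u \<theta> z \<partial>F)"
  proof -
    have mz: "ualpha \<alpha> f W u \<theta> \<in> borel_measurable lborel"
      unfolding ualpha_def[abs_def]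
      by (rule lborel.borel_measurable_lebesgue_integral) measurable
    have "(\<integral>z. ualpha \<alpha> f W u \<theta> z \<partial>F) = (\<integral>z. f \<theta> z *\<^sub>R ualpha \<alpha> f W u \<theta> z \<partial>lborel)"
      unfolding F_def Fdist_def
      by (rule integral_density) (use mz dens_nonneg[OF Theta(2)] in auto)
    also have "\<dots> = (\<integral>z. (\<integral>x. (f \<theta> z * W x z * fstar f W \<theta> x powr \<alpha>) *\<^sub>R u \<theta> x \<partial>lborel) \<partial>lborel)"
      by (intro Bochner_Integration.integral_cong refl)
         (simp add: ualpha_def integral_scaleR_right[symmetric] scaleR_scaleR mult_ac del: integral_scaleR_right)
    also have "\<dots> = (\<integral>x. (\<integral>z. (f \<theta> z * W x z * fstar f W \<theta> x powr \<alpha>) *\<^sub>R u \<theta> x \<partial>lborel) \<partial>lborel)"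
      by (rule lborel_pair.Fubini_integral) (use int1 in simp)
    also have "\<dots> = (\<integral>x. v2 x \<partial>lborel)" by (simp add: inner1)
    finally show ?thesis by simp
  qed
  moreover have I3: "(\<integral>x. M3 x \<partial>lborel) = J"
  proof -
    have mz: "u2alpha \<alpha> f W u \<theta> \<in> borel_measurable lborel"
      unfolding u2alpha_def[abs_def]
      by (rule lborel.borel_measurable_lebesgue_integral) measurable
    have "J = (\<integral>z. f \<theta> z *\<^sub>R u2alpha \<alpha> f W u \<theta> z \<partial>lborel)"
      unfolding J_def F_def Fdist_def
      by (rule integral_density) (use mz dens_nonneg[OF Theta(2)] in auto)
    also have "\<dots> = (\<integral>z. (\<integral>x. (f \<theta> z * W x z * fstar f W \<theta> x powr \<alpha>) *\<^sub>R outer (u \<theta> x) \<partial>lborel) \<partial>lborel)"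
      by (intro Bochner_Integration.integral_cong refl)
         (simp add: u2alpha_def integral_scaleR_right[symmetric] scaleR_scaleR mult_ac del: integral_scaleR_right)
    also have "\<dots> = (\<integral>x. (\<integral>z. (f \<theta> z * W x z * fstar f W \<theta> x powr \<alpha>) *\<^sub>R outer (u \<theta> x) \<partial>lborel) \<partial>lborel)"
      by (rule lborel_pair.Fubini_integral) (use int2 in simp)
    also have "\<dots> = (\<integral>x. M3 x \<partial>lborel)" by (simp add: inner2)
    finally show ?thesis by simp
  qed
  ultimately have "J *v T' = ualpha \<alpha> f W u \<theta> y - (\<integral>z. ualpha \<alpha> f W u \<theta> z \<partial>F)"
    using D0 by (simp add: algebra_simps)
  then have "matrix_inv J *v (ualpha \<alpha> f W u \<theta> y - (\<integral>z. ualpha \<alpha> f W u \<theta> z \<partial>F)) = T'"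
    using matrix_inv_left'[OF J_inv] by (metis matrix_vector_mul_assoc matrix_vector_mul_lid)
  then show ?thesis by (simp add: T'_def)
qed


end
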